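(* Let $p$ be an odd prime and $k\in\{1,2,\ldots,(p-1)/2\}$. Then $$\binom{\frac{p-1}2+k}{2k}\equiv\frac{\binom{2k}k}{(-16)^k}\Big(1-p^2\sum_{i=1}^k\frac1{(2i-1)^2}\Big)\pmod{p^4}.$$
   Context: Congruences are between rational numbers whose denominators are prime to $p$. *)

theory Defs
  imports Complex_Main "HOL-Computational_Algebra.Primes"
begin

definition rat_cong_pow :: "nat \<Rightarrow> nat \<Rightarrow> rat \<Rightarrow> rat \<Rightarrow> bool" where
  "rat_cong_pow p n a b \<longleftrightarrow>
     (\<exists>r::rat. a - b = of_nat p ^ n * r \<and> coprime (snd (quotient_of r)) (int p))"

end

theory Submission
  imports Defs
begin

declare binomial_Suc_Suc[simp del]

lemma binom_gen:
  fixes M j :: nat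
  shows "Suc (Suc j) * Suc j * (Suc M choose Suc (Suc j)) = Suc M * (M - j) * (M choose j)"
proof -
  have a: "Suc (Suc j) * (Suc M choose Suc (Suc j)) = Suc M * (M choose Suc j)"
    using binomial_absorption[of "Suc j" "Suc M"] by (simp add: algebra_simps)
  have b: "Suc j * (M choose Suc j) = (M - j) * (M choose j)"
    using binomial_absorb_comp[of M j] binomial_absorption[of j M] by simp
  have "Suc (Suc j) * Suc j * (Suc M choose Suc (Suc j)) = Suc j * (Suc (Suc j) * (Suc M choose Suc (Suc j)))"
    by (simp only: ac_simps)
  also have "\<dots> = Suc M * (Suc j * (M choose Suc j))" using a by (simp only: ac_simps)
  also have "\<dots> = Suc M * (M - j) * (M choose j)" using b by (simp only: ac_simps)
  finally show ?thesis .
qed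

lemma binom_step:
  fixes n k :: nat
  shows "((n + k + 1) choose (2*k+2)) * ((2*k+2)*(2*k+1)) = ((n+k) choose (2*k)) * (n+k+1) * (n - k)"
proof -
  have "n + k - 2*k = n - k" by simp
  moreover have "n+k+1 = Suc (n+k)" "2*k+2 = Suc (Suc (2*k))" "2*k+1 = Suc (2*k)" by simp_all
  ultimately show ?thesis using binom_gen[of "2*k" "n+k"] by (simp only: ac_simps)
qed

lemma cbinom_nat:
  fixes k :: nat
  shows "((2*k+2) choose (k+1)) * ((k+1)*(k+1)) = ((2*k) choose k) * ((2*k+2)*(2*k+1))"
proof -
  have h: "2*k+2-(k+1) = k+1" "k+1 \<le> 2*k+2" "2*k-k = k" "k \<le> 2*k" by simp_all
  have e1: "fact (k+1) * fact (k+1) * ((2*k+2) choose (k+1)) = (fact (2*k+2) :: nat)"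
    using binomial_fact_lemma[OF h(2), unfolded h(1)] .
  have e2: "fact k * fact k * ((2*k) choose k) = (fact (2*k) :: nat)"
    using binomial_fact_lemma[OF h(4), unfolded h(3)] .
  have f1: "(fact (2*k+2) :: nat) = (2*k+2)*(2*k+1) * fact (2*k)"
    by (simp add: numeral_2_eq_2 algebra_simps)
  have f2: "(fact (k+1) :: nat) = (k+1) * fact k" by (simp add: algebra_simps)
  have "((2*k+2) choose (k+1)) * ((k+1)*(k+1)) * (fact k * fact k) = ((2*k) choose k) * ((2*k+2)*(2*k+1)) * (fact k * fact k)"
    using e1 e2 f1 f2 by (simp add: algebra_simps)
  then show ?thesis by simp
qed

lemma cbinom_step:
  fixes k :: nat
  shows "(of_nat ((2*k+2) choose (k+1)) :: rat) * ((of_nat k+1)*(of_nat k+1)) = of_nat ((2*k) choose k) * ((2*of_nat k+2)*(2*of_nat k+1))"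
  using arg_cong[OF cbinom_nat[of k], of "of_nat :: nat \<Rightarrow> rat"] by (simp add: algebra_simps)

lemma alg:
  fixes A A' C C' P n k :: rat
  assumes "A' * ((2*k+2)*(2*k+1)) = A * (n+k+1) * (n-k)"
    and "C' * ((k+1)*(k+1)) = C * ((2*k+2)*(2*k+1))"
    and "A = C / (-16)^m * P" and "k \<ge> 0"
  shows "A' = C' / (-16)^(Suc m) * (P * (1 - (2*n+1)^2/(2*k+1)^2))"
proof -
  have d1: "(2*k+2)*(2*k+1) \<noteq> 0" "(k+1)*(k+1) \<noteq> 0" using assms(4) by (auto simp: add_nonneg_eq_0_iff)
  have hA: "A' = A * (n+k+1) * (n-k) / ((2*k+2)*(2*k+1))" using assms(1) d1 by (simp add: eq_divide_eq)
  have hC: "C' = C * ((2*k+2)*(2*k+1)) / ((k+1)*(k+1))" using assms(2) d1 by (simp add: eq_divide_eq)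
  have br1: "a*u/((a/2)*(a/2)) / (-16) * (1 - w^2/u^2) = ((w+u)/2)*((w-u)/2)/(a*u)"
    if "u \<noteq> 0" "a \<noteq> 0" for u w a :: rat
    using that by (simp add: field_simps power2_eq_square)
  have br0: "(u+1)*u/(((u+1)/2)*((u+1)/2)) / (-16) * (1 - w^2/u^2) = ((w+u)/2)*((w-u)/2)/((u+1)*u)"
    if "u > 0" for u w :: rat
    using br1[of u "u+1" w] that by simp
  have br: "(2*k+2)*(2*k+1)/((k+1)*(k+1)) / (-16) * (1 - (2*n+1)^2/(2*k+1)^2) = (n+k+1)*(n-k)/((2*k+2)*(2*k+1))"
  proof -
    have "2*k+1 > 0" using assms(4) by simp
    from br0[OF this, of "2*n+1"] show ?thesis
      by (simp add: algebra_simps add_divide_distrib diff_divide_distrib)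
  qed
  have "C' / (-16)^(Suc m) * (P * (1 - (2*n+1)^2/(2*k+1)^2)) = C / (-16)^m * P * ((2*k+2)*(2*k+1)/((k+1)*(k+1)) / (-16) * (1 - (2*n+1)^2/(2*k+1)^2))"
    using hC by (simp add: ac_simps)
  also have "\<dots> = A * ((n+k+1)*(n-k)/((2*k+2)*(2*k+1)))" unfolding br assms(3) ..
  finally show ?thesis using hA by simp
qed

lemma main_id:
  fixes n k :: nat
  shows "k \<le> n \<Longrightarrow> (of_nat ((n+k) choose (2*k)) :: rat) = of_nat ((2*k) choose k) / (-16)^k *
     (\<Prod>i=1..k. 1 - of_nat (2*n+1)^2 / of_nat (2*i-1)^2)"
proof (induction k)
  case 0 then show ?case by simp
next
  case (Suc k)
  have s1: "(of_nat ((n + k + 1) choose (2*k+2)) :: rat) * ((2*of_nat k+2)*(2*of_nat k+1)) = of_nat ((n+k) choose (2*k)) * (of_nat n+of_nat k+1) * (of_nat n - of_nat k)"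
  proof -
    have h: "(of_nat ((n + k + 1) choose (2*k+2)) :: rat) * (of_nat ((2*k+2)*(2*k+1))) = of_nat ((n+k) choose (2*k)) * of_nat (n+k+1) * of_nat (n - k)"
      using arg_cong[OF binom_step[of n k], of "of_nat :: nat \<Rightarrow> rat"] by (simp only: of_nat_mult)
    have "(of_nat (n - k) :: rat) = of_nat n - of_nat k" using Suc.prems by (simp add: of_nat_diff)
    moreover have "(of_nat ((2*k+2)*(2*k+1)) :: rat) = (2*of_nat k+2)*(2*of_nat k+1)" by (simp add: algebra_simps)
    moreover have "(of_nat (n+k+1) :: rat) = of_nat n+of_nat k+1" by simp
    ultimately show ?thesis using h by metis
  qed
  have X: "(of_nat ((n + k + 1) choose (2*k+2)) :: rat) = of_nat ((2*k+2) choose (k+1)) / (-16)^(Suc k) *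
     ((\<Prod>i=1..k. 1 - of_nat (2*n+1)^2 / of_nat (2*i-1)^2) * (1 - (2*of_nat n+1)^2/(2*of_nat k+1)^2))"
    by (rule alg[OF s1 cbinom_step]) (use Suc in auto)
  have Y: "(\<Prod>i=1..Suc k. 1 - of_nat (2*n+1)^2 / of_nat (2*i-1)^2 :: rat) = (\<Prod>i=1..k. 1 - of_nat (2*n+1)^2 / of_nat (2*i-1)^2) * (1 - (2*of_nat n+1)^2/(2*of_nat k+1)^2)"
    using prod.nat_ivl_Suc'[of 1 k "\<lambda>i. 1 - of_nat (2*n+1)^2 / (of_nat (2*i-1) :: rat)^2"] by (simp add: mult.commute add.commute)
  have e: "n + Suc k = n+k+1" "2*Suc k = 2*k+2" "(2*k+2) choose (k+1) = (2*k+2) choose Suc k" by simp_all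
  show ?case unfolding e Y using X e(3) by (simp only:)
qed


definition pint :: "nat \<Rightarrow> rat \<Rightarrow> bool" where
  "pint p r \<longleftrightarrow> (\<exists>a b. b \<noteq> 0 \<and> coprime b (int p) \<and> r = of_int a / of_int b)"

lemma pint_int: "pint p (of_int a)"
  unfolding pint_def by (rule exI[of _ a], rule exI[of _ 1]) simp

lemma pint_inv: "b \<noteq> 0 \<Longrightarrow> coprime b (int p) \<Longrightarrow> pint p (1 / of_int b)"
  unfolding pint_def by (rule exI[of _ 1], rule exI[of _ b]) simp

lemma pint_mult: "pint p x \<Longrightarrow> pint p y \<Longrightarrow> pint p (x * y)"
  unfolding pint_def
proof (elim exE conjE)
  fix a b c d assume h: "b \<noteq> 0" "coprime b (int p)" "x = of_int a / of_int b"
    "d \<noteq> 0" "coprime d (int p)" "y = of_int c / of_int d"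
  show "\<exists>a b. b \<noteq> 0 \<and> coprime b (int p) \<and> x * y = rat_of_int a / rat_of_int b"
    by (rule exI[of _ "a*c"], rule exI[of _ "b*d"]) (use h in simp)
qed

lemma pint_add: "pint p x \<Longrightarrow> pint p y \<Longrightarrow> pint p (x + y)"
  unfolding pint_def
proof (elim exE conjE)
  fix a b c d assume h: "b \<noteq> 0" "coprime b (int p)" "x = of_int a / of_int b"
    "d \<noteq> 0" "coprime d (int p)" "y = of_int c / of_int d"
  show "\<exists>a b. b \<noteq> 0 \<and> coprime b (int p) \<and> x + y = rat_of_int a / rat_of_int b"
    by (rule exI[of _ "a*d + c*b"], rule exI[of _ "b*d"]) (use h in \<open>simp add: field_simps\<close>)
qed

lemma pint_neg: "pint p x \<Longrightarrow> pint p (- x)"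
  using pint_mult[OF pint_int[of p "-1"]] by simp

lemma pint_diff: "pint p x \<Longrightarrow> pint p y \<Longrightarrow> pint p (x - y)"
  using pint_add[OF _ pint_neg] by simp

lemma pint_sum: "(\<And>i. i \<in> A \<Longrightarrow> pint p (f i)) \<Longrightarrow> pint p (sum f A)"
proof (induction A rule: infinite_finite_induct)
  case (infinite A) then show ?case using pint_int[of p 0] by simp
next
  case empty then show ?case using pint_int[of p 0] by simp
next
  case (insert x F) then show ?case by (simp add: pint_add)
qed

lemma pint_coprime:
  assumes "pint p r" shows "coprime (snd (quotient_of r)) (int p)"
proof -
  obtain a b where ab: "b \<noteq> 0" "coprime b (int p)" "r = of_int a / of_int b"
    using assms unfolding pint_def by blast
  obtain c d where cd: "quotient_of r = (c, d)" by (cases "quotient_of r")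
  have d0: "d > 0" using quotient_of_denom_pos[OF cd] .
  have cop: "coprime c d" using quotient_of_coprime[OF cd] .
  have "r = of_int c / of_int d" using quotient_of_div[OF cd] .
  with ab d0 have "of_int a / of_int b = (of_int c / of_int d :: rat)" by simp
  then have "rat_of_int (a * d) = rat_of_int (c * b)" using ab(1) d0 by (simp add: field_simps)
  then have "a * d = c * b" by (simp only: of_int_eq_iff)
  then have "d dvd c * b" by (metis dvd_triv_right)
  then have "d dvd b" using cop by (simp add: coprime_commute coprime_dvd_mult_right_iff)
  then have "coprime d (int p)" using ab(2) by (rule coprime_divisors[OF _ dvd_refl])
  then show ?thesis using cd by simp
qed

lemma prod_expand:
  fixes x :: "nat \<Rightarrow> rat"
  assumes "\<And>i. i \<in> {1..k} \<Longrightarrow> pint p (x i)" and "pint p q"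
  shows "\<exists>r. pint p r \<and> (\<Prod>i=1..k. 1 - q * x i) = 1 - q * (\<Sum>i=1..k. x i) + q^2 * r"
  using assms(1)
proof (induction k)
  case 0 then show ?case using pint_int[of p 0] by (intro exI[of _ 0]) simp
next
  case (Suc k)
  then obtain r where r: "pint p r" "(\<Prod>i=1..k. 1 - q * x i) = 1 - q * (\<Sum>i=1..k. x i) + q^2 * r"
    by auto
  let ?S = "\<Sum>i=1..k. x i"
  have pS: "pint p ?S" using Suc.prems by (intro pint_sum) auto
  have px: "pint p (x (Suc k))" using Suc.prems by simp
  let ?r = "x (Suc k) * ?S + r - q * x (Suc k) * r"
  have pr: "pint p ?r"
    by (intro pint_diff pint_add pint_mult px pS r(1) assms(2))
  have "(\<Prod>i=1..Suc k. 1 - q * x i) = (1 - q * x (Suc k)) * (1 - q * ?S + q^2 * r)"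
    using r(2) by (simp add: prod.nat_ivl_Suc')
  also have "\<dots> = 1 - q * (?S + x (Suc k)) + q^2 * ?r" by (simp add: algebra_simps power2_eq_square)
  also have "?S + x (Suc k) = (\<Sum>i=1..Suc k. x i)" by simp
  finally show ?case using pr by blast
qed

theorem lemma2p2:
  fixes p k :: nat
  assumes "prime p" and "odd p" and "1 \<le> k" and "k \<le> (p - 1) div 2"
  shows "rat_cong_pow p 4
           (of_nat (((p - 1) div 2 + k) choose (2 * k)))
           (of_nat ((2 * k) choose k) / (-16) ^ k *
              (1 - of_nat p ^ 2 * (\<Sum>i = 1..k. 1 / (of_nat (2 * i - 1))^2)))"
proof -
  define n where "n = (p - 1) div 2"
  have p1: "p \<ge> 1" using assms(1) prime_ge_1_nat by blast
  have hn: "2*n+1 = p" unfolding n_def using assms(2) p1 by (auto elim!: oddE)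
  define c :: rat where "c = of_nat ((2 * k) choose k) / (-16) ^ k"
  define q :: rat where "q = of_nat p ^ 2"
  define x :: "nat \<Rightarrow> rat" where "x i = 1 / (of_nat (2 * i - 1))^2" for i
  have id: "(of_nat ((n+k) choose (2*k)) :: rat) = c * (\<Prod>i=1..k. 1 - q * x i)"
    using main_id[of k n] assms(4) unfolding n_def[symmetric] c_def q_def x_def hn by simp
  have px: "pint p (x i)" if "i \<in> {1..k}" for i
  proof -
    have "0 < 2*i-1" "2*i-1 < p" using that assms(4) hn unfolding n_def[symmetric] by auto
    then have "\<not> p dvd (2*i-1)" by (auto dest: dvd_imp_le)
    then have "coprime p (2*i-1)" using assms(1) by (rule prime_imp_coprime[rotated])
    then have "coprime ((int (2*i-1))^2) (int p)" by (simp add: coprime_commute)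
    moreover have "(int (2*i-1))^2 \<noteq> 0" using \<open>0 < 2*i-1\<close> by simp
    ultimately have "pint p (1 / of_int ((int (2*i-1))^2))" by (rule pint_inv[rotated])
    then show ?thesis unfolding x_def by simp
  qed
  have pq: "pint p q" unfolding q_def using pint_int[of p "int p ^ 2"] by simp
  obtain r where r: "pint p r" "(\<Prod>i=1..k. 1 - q * x i) = 1 - q * (\<Sum>i=1..k. x i) + q^2 * r"
    using prod_expand[of k p x q, OF px pq] by blast
  have pc: "pint p c"
  proof -
    have "p \<noteq> 2" using assms(2) by auto
    then have "\<not> p dvd 2" using dvd_imp_le[of p 2] prime_ge_2_nat[OF assms(1)] by auto
    then have "coprime p 2" using assms(1) by (rule prime_imp_coprime[rotated])
    then have "coprime (int p) 2" by (metis coprime_int_iff of_nat_numeral)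
    then have "coprime ((2::int)^4) (int p)" by (metis coprime_commute coprime_power_left_iff)
    then have "coprime (-(16::int)) (int p)" by (simp only: coprime_minus_left_iff) simp
    then have "coprime ((-16::int)^k) (int p)" by (simp only: coprime_power_left_iff) simp
    moreover have "(-16::int)^k \<noteq> 0" by simp
    ultimately have "pint p (1 / of_int ((-16)^k))" by (rule pint_inv[rotated])
    from pint_mult[OF pint_int[of p "int ((2 * k) choose k)"] this] show ?thesis
      unfolding c_def by simp
  qed
  have "of_nat ((n+k) choose (2*k)) - c * (1 - q * (\<Sum>i=1..k. x i)) = of_nat p ^ 4 * (c * r)"
  proof -
    have "of_nat ((n+k) choose (2*k)) - c * (1 - q * (\<Sum>i=1..k. x i)) = c * (q^2 * r)"
      unfolding id r(2) by (simp add: algebra_simps)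
    moreover have "q^2 = of_nat p ^ 4" unfolding q_def by (simp flip: power_mult)
    ultimately show ?thesis by (simp add: ac_simps)
  qed
  moreover have "coprime (snd (quotient_of (c * r))) (int p)" by (rule pint_coprime[OF pint_mult[OF pc r(1)]])
  ultimately show ?thesis unfolding rat_cong_pow_def n_def[symmetric] c_def[symmetric] q_def[symmetric] x_def[symmetric]
    by blast
qed

end
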